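(* In a strongly causal, digitalizable OPT, let $\rho\in\mathsf{St}_1(\mathrm{A})$. Let $E^F_{N,M,\varepsilon}(\rho):=\{(\mathcal E,\mathcal D): F(\rho^{\boxtimes N},\mathcal D\circ\mathcal E)>1-\varepsilon\}$ and $I^F(\rho):=\lim_{\varepsilon\to0}\limsup_{N\to\infty}\min\{M:E^F_{N,M,\varepsilon}(\rho)\ne\emptyset\}/N$. Then $I^F(\rho)=I^{\rm dil}(\rho)$.
   Context: Framework (operational probabilistic theory, OPT): each system $\mathrm{A}$ has states $\mathsf{St}(\mathrm{A})$ (normalized ones $\mathsf{St}_1(\mathrm{A})$), effects $\mathsf{Eff}(\mathrm{A})$, transformations $\mathsf{Tr}(\mathrm{A}\to\mathrm{B})$ (channels $\mathsf{Tr}_1$), sequential ($\circ$) and parallel ($\boxtimes$) composition, pairing $(a|\rho)$. Strong causality: for every test $\{\mathcal A_i\}$ and tests $\{\mathcal B^i_j\}_j$, $\{\mathcal B^i_j\circ\mathcal A_i\}$ is a test; unique deterministic effect $e_{\mathrm{A}}$. Operational norm $\|\delta\|_{\rm op}:=\sup_{a\in\mathsf{Eff}(\mathrm{A})}((2a-e_{\mathrm{A}})|\delta)$. A dilation of $\rho\in\mathsf{St}(\mathrm{A})$ is $\Psi\in\mathsf{St}(\mathrm{A}\mathrm{C})$ with $(\mathcal I_{\mathrm{A}}\boxtimes e_{\mathrm{C}})\Psi=\rho$; $D_\rho$ is the set of dilations. Digitalizability: there is an obit system $\mathrm{O}$ such that every system $\mathrm{X}$ can be perfectly encoded via channels into $\mathrm{O}^{\boxtimes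 k}$ for some finite $k$. A compression scheme for $\rho$ is $\mathcal E\in\mathsf{Tr}_1(\mathrm{A}^{\boxtimes N}\to\mathrm{O}^{\boxtimes M})$, $\mathcal D\in\mathsf{Tr}_1(\mathrm{O}^{\boxtimes M}\to\mathrm{A}^{\boxtimes N})$. Fidelity: for $\rho,\sigma\in\mathsf{St}_1(\mathrm{A})$, $F(\rho,\sigma):=\inf_{\{a_i\}}\sum_i\sqrt{(a_i|\rho)(a_i|\sigma)}$, infimum over observation tests $\{a_i\}$ of $\mathrm{A}$. Correlation fidelity of $\rho\in\mathsf{St}_1(\mathrm{A})$ and a channel $\mathcal C\in\mathsf{Tr}_1(\mathrm{A}\to\mathrm{A})$: $F(\rho,\mathcal C):=\inf_{\Psi\in D_\rho}F[\Psi,(\mathcal C\boxtimes\mathcal I)(\Psi)]^2$. $I^{\rm dil}$: $E^{\rm dil}_{N,M,\varepsilon}(\rho)$ is the set of compression schemes with $\sup_{\Psi\in D_{\rho^{\boxtimes N}}}\|((\mathcal D\circ\mathcal E)\boxtimes\mathcal I)(\Psi)-\Psi\|_{\rm op}<\varepsilon$, and $I^{\rm dil}(\rho):=\lim_{\varepsilon\to0}\limsup_{N\to\infty}\min\{M:E^{\rm dil}_{N,M,\varepsilon}(\rho)\ne\emptyset\}/N$. *)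

theory Defs
  imports Complex_Main "HOL-Library.Extended_Real" "HOL-Library.Liminf_Limsup"
begin

text \<open>Systems have type 's, events (elements of tests, i.e. transformations) have type 'e.
  Tests are finite nonempty lists of events (outcomes indexed by list positions).\<close>

record ('s, 'e) opt =
  triv    :: 's
  psys    :: "'s \<Rightarrow> 's \<Rightarrow> 's"
  sdom    :: "'e \<Rightarrow> 's"
  scod    :: "'e \<Rightarrow> 's"
  seq     :: "'e \<Rightarrow> 'e \<Rightarrow> 'e"         \<comment> \<open>seq g f = g \<circ> f\<close>
  par     :: "'e \<Rightarrow> 'e \<Rightarrow> 'e"
  ident   :: "'s \<Rightarrow> 'e"
  swap    :: "'s \<Rightarrow> 's \<Rightarrow> 'e"
  cg      :: "'e \<Rightarrow> 'e \<Rightarrow> 'e"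
  tests   :: "'e list set"
  prb     :: "'e \<Rightarrow> real"             \<comment> \<open>probability of an event I \<rightarrow> I\<close>

definition is_test :: "('s,'e) opt \<Rightarrow> 'e list \<Rightarrow> 's \<Rightarrow> 's \<Rightarrow> bool" where
  "is_test T t A B \<longleftrightarrow> t \<in> tests T \<and> (\<forall>f\<in>set t. sdom T f = A \<and> scod T f = B)"

definition Tr :: "('s,'e) opt \<Rightarrow> 's \<Rightarrow> 's \<Rightarrow> 'e set" where
  "Tr T A B = {f. \<exists>t. is_test T t A B \<and> f \<in> set t}"

text \<open>Deterministic transformations (channels): singleton tests.\<close>
definition Tr1 :: "('s,'e) opt \<Rightarrow> 's \<Rightarrow> 's \<Rightarrow> 'e set" where
  "Tr1 T A B = {f. is_test T [f] A B}"

definition St :: "('s,'e) opt \<Rightarrow> 's \<Rightarrow> 'e set" where "St T A = Tr T (triv T) A"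
definition St1 :: "('s,'e) opt \<Rightarrow> 's \<Rightarrow> 'e set" where "St1 T A = Tr1 T (triv T) A"
definition Eff :: "('s,'e) opt \<Rightarrow> 's \<Rightarrow> 'e set" where "Eff T A = Tr T A (triv T)"

definition pairing :: "('s,'e) opt \<Rightarrow> 'e \<Rightarrow> 'e \<Rightarrow> real" where
  "pairing T a \<rho> = prb T (seq T a \<rho>)"

text \<open>f and g occur as distinct outcomes of a common test (so their coarse graining is meaningful).\<close>
definition cg_ok :: "('s,'e) opt \<Rightarrow> 'e \<Rightarrow> 'e \<Rightarrow> bool" where
  "cg_ok T f g \<longleftrightarrow> (\<exists>t i j. t \<in> tests T \<and> i < length t \<and> j < length t \<and> i \<noteq> j \<and> t!i = f \<and> t!j = g)"

definition OPT :: "('s,'e) opt \<Rightarrow> bool" where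
  "OPT T \<longleftrightarrow>
    \<comment> \<open>category\<close>
    (\<forall>f g. scod T f = sdom T g \<longrightarrow> sdom T (seq T g f) = sdom T f \<and> scod T (seq T g f) = scod T g) \<and>
    (\<forall>f g h. scod T f = sdom T g \<and> scod T g = sdom T h \<longrightarrow>
        seq T h (seq T g f) = seq T (seq T h g) f) \<and>
    (\<forall>A. sdom T (ident T A) = A \<and> scod T (ident T A) = A) \<and>
    (\<forall>f. seq T (ident T (scod T f)) f = f \<and> seq T f (ident T (sdom T f)) = f) \<and>
    \<comment> \<open>strict monoidal structure\<close>
    (\<forall>A B C. psys T A (psys T B C) = psys T (psys T A B) C) \<and>
    (\<forall>A. psys T (triv T) A = A \<and> psys T A (triv T) = A) \<and>
    (\<forall>f g. sdom T (par T f g) = psys T (sdom T f) (sdom T g) \<and>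
           scod T (par T f g) = psys T (scod T f) (scod T g)) \<and>
    (\<forall>f g h. par T f (par T g h) = par T (par T f g) h) \<and>
    (\<forall>f. par T (ident T (triv T)) f = f \<and> par T f (ident T (triv T)) = f) \<and>
    (\<forall>A B. par T (ident T A) (ident T B) = ident T (psys T A B)) \<and>
    (\<forall>f1 f2 g1 g2. scod T f1 = sdom T g1 \<and> scod T f2 = sdom T g2 \<longrightarrow>
        par T (seq T g1 f1) (seq T g2 f2) = seq T (par T g1 g2) (par T f1 f2)) \<and>
    \<comment> \<open>symmetry\<close>
    (\<forall>A B. sdom T (swap T A B) = psys T A B \<and> scod T (swap T A B) = psys T B A) \<and>
    (\<forall>A B. seq T (swap T B A) (swap T A B) = ident T (psys T A B)) \<and>
    (\<forall>f g. seq T (swap T (scod T f) (scod T g)) (par T f g) =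
           seq T (par T g f) (swap T (sdom T f) (sdom T g))) \<and>
    \<comment> \<open>probabilities of events I \<rightarrow> I\<close>
    (\<forall>p q. sdom T p = triv T \<and> scod T p = triv T \<and> sdom T q = triv T \<and> scod T q = triv T \<longrightarrow>
        prb T (seq T p q) = prb T p * prb T q \<and> prb T (par T p q) = prb T p * prb T q) \<and>
    (\<forall>p q. cg_ok T p q \<and> sdom T p = triv T \<and> scod T p = triv T \<longrightarrow>
        prb T (cg T p q) = prb T p + prb T q) \<and>
    \<comment> \<open>tests\<close>
    (\<forall>t\<in>tests T. t \<noteq> [] \<and> (\<forall>f\<in>set t. \<forall>g\<in>set t. sdom T f = sdom T g \<and> scod T f = scod T g)) \<and>
    (\<forall>t. is_test T t (triv T) (triv T) \<longrightarrow> (\<forall>p\<in>set t. 0 \<le> prb T p) \<and> sum_list (map (prb T) t) = 1) \<and>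
    (\<forall>A. [ident T A] \<in> tests T) \<and>
    (\<forall>A B. [swap T A B] \<in> tests T) \<and>
    (\<forall>t u A B C. is_test T t A B \<and> is_test T u B C \<longrightarrow>
        concat (map (\<lambda>f. map (\<lambda>g. seq T g f) u) t) \<in> tests T) \<and>
    (\<forall>t u. t \<in> tests T \<and> u \<in> tests T \<longrightarrow>
        concat (map (\<lambda>f. map (\<lambda>g. par T f g) u) t) \<in> tests T) \<and>
    \<comment> \<open>coarse graining\<close>
    (\<forall>t i j. t \<in> tests T \<and> i < length t \<and> j < length t \<and> i \<noteq> j \<longrightarrow>
        cg T (t!i) (t!j) #
            map (\<lambda>k. t!k) (filter (\<lambda>k. k \<noteq> i \<and> k \<noteq> j) [0..<length t]) \<in> tests T) \<and>
    (\<forall>f g. cg_ok T f g \<longrightarrow> sdom T (cg T f g) = sdom T f \<and> scod T (cg T f g) = scod T f) \<and>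
    (\<forall>f g h. cg_ok T f g \<and> scod T f = sdom T h \<and> scod T g = sdom T h \<longrightarrow>
        seq T h (cg T f g) = cg T (seq T h f) (seq T h g)) \<and>
    (\<forall>f g h. cg_ok T f g \<and> scod T h = sdom T f \<and> scod T h = sdom T g \<longrightarrow>
        seq T (cg T f g) h = cg T (seq T f h) (seq T g h)) \<and>
    (\<forall>f g h. cg_ok T f g \<longrightarrow> par T (cg T f g) h = cg T (par T f h) (par T g h) \<and>
             par T h (cg T f g) = cg T (par T h f) (par T h g)) \<and>
    \<comment> \<open>events are identified by their statistics in all circuits (with ancillas)\<close>
    (\<forall>f g A B. f \<in> Tr T A B \<and> g \<in> Tr T A B \<and>
       (\<forall>E \<Psi> a. \<Psi> \<in> St T (psys T A E) \<and> a \<in> Eff T (psys T B E) \<longrightarrow>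
          pairing T a (seq T (par T f (ident T E)) \<Psi>) = pairing T a (seq T (par T g (ident T E)) \<Psi>))
       \<longrightarrow> f = g)"

definition strongly_causal :: "('s,'e) opt \<Rightarrow> bool" where
  "strongly_causal T \<longleftrightarrow>
    (\<forall>t A B C us. is_test T t A B \<and> length us = length t \<and> (\<forall>i<length t. is_test T (us!i) B C) \<longrightarrow>
       concat (map (\<lambda>i. map (\<lambda>g. seq T g (t!i)) (us!i)) [0..<length t]) \<in> tests T) \<and>
    (\<forall>A. \<exists>!e. e \<in> Tr1 T A (triv T))"

definition det_eff :: "('s,'e) opt \<Rightarrow> 's \<Rightarrow> 'e" where
  "det_eff T A = (THE e. e \<in> Tr1 T A (triv T))"

fun sys_pow :: "('s,'e) opt \<Rightarrow> 's \<Rightarrow> nat \<Rightarrow> 's" where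
  "sys_pow T A 0 = triv T"
| "sys_pow T A (Suc n) = psys T A (sys_pow T A n)"

fun ev_pow :: "('s,'e) opt \<Rightarrow> 'e \<Rightarrow> nat \<Rightarrow> 'e" where
  "ev_pow T f 0 = ident T (triv T)"
| "ev_pow T f (Suc n) = par T f (ev_pow T f n)"

text \<open>Digitalizability with obit system Ob: perfect encoding of every system into Ob^k.\<close>
definition digitalizable_via :: "('s,'e) opt \<Rightarrow> 's \<Rightarrow> bool" where
  "digitalizable_via T Ob \<longleftrightarrow>
    (\<forall>X. \<exists>k E D. E \<in> Tr1 T X (sys_pow T Ob k) \<and> D \<in> Tr1 T (sys_pow T Ob k) X \<and>
                  seq T D E = ident T X)"

definition op_dist :: "('s,'e) opt \<Rightarrow> 's \<Rightarrow> 'e \<Rightarrow> 'e \<Rightarrow> real" where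
  "op_dist T A \<Psi>' \<Psi> = (SUP a \<in> Eff T A.
      (2 * pairing T a \<Psi>' - pairing T (det_eff T A) \<Psi>') -
      (2 * pairing T a \<Psi> - pairing T (det_eff T A) \<Psi>))"

definition fidelity :: "('s,'e) opt \<Rightarrow> 's \<Rightarrow> 'e \<Rightarrow> 'e \<Rightarrow> real" where
  "fidelity T A \<rho> \<sigma> = (INF t \<in> {t. is_test T t A (triv T)}.
      sum_list (map (\<lambda>a. sqrt (pairing T a \<rho> * pairing T a \<sigma>)) t))"

definition dilations :: "('s,'e) opt \<Rightarrow> 's \<Rightarrow> 'e \<Rightarrow> ('s \<times> 'e) set" where
  "dilations T A \<rho> = {(C, \<Psi>). \<Psi> \<in> St T (psys T A C) \<and>
      seq T (par T (ident T A) (det_eff T C)) \<Psi> = \<rho>}"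

definition corr_fidelity :: "('s,'e) opt \<Rightarrow> 's \<Rightarrow> 'e \<Rightarrow> 'e \<Rightarrow> real" where
  "corr_fidelity T A \<rho> Ch = (INF (C, \<Psi>) \<in> dilations T A \<rho>.
      (fidelity T (psys T A C) \<Psi> (seq T (par T Ch (ident T C)) \<Psi>))\<^sup>2)"

definition schemes_F :: "('s,'e) opt \<Rightarrow> 's \<Rightarrow> 's \<Rightarrow> 'e \<Rightarrow> nat \<Rightarrow> nat \<Rightarrow> real \<Rightarrow> ('e \<times> 'e) set" where
  "schemes_F T Ob A \<rho> N M \<epsilon> = {(E, D). E \<in> Tr1 T (sys_pow T A N) (sys_pow T Ob M) \<and>
      D \<in> Tr1 T (sys_pow T Ob M) (sys_pow T A N) \<and>
      corr_fidelity T (sys_pow T A N) (ev_pow T \<rho> N) (seq T D E) > 1 - \<epsilon>}"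

definition schemes_dil :: "('s,'e) opt \<Rightarrow> 's \<Rightarrow> 's \<Rightarrow> 'e \<Rightarrow> nat \<Rightarrow> nat \<Rightarrow> real \<Rightarrow> ('e \<times> 'e) set" where
  "schemes_dil T Ob A \<rho> N M \<epsilon> = {(E, D). E \<in> Tr1 T (sys_pow T A N) (sys_pow T Ob M) \<and>
      D \<in> Tr1 T (sys_pow T Ob M) (sys_pow T A N) \<and>
      (SUP (C, \<Psi>) \<in> dilations T (sys_pow T A N) (ev_pow T \<rho> N).
         op_dist T (psys T (sys_pow T A N) C) (seq T (par T (seq T D E) (ident T C)) \<Psi>) \<Psi>) < \<epsilon>}"

definition comp_rate :: "(nat \<Rightarrow> nat \<Rightarrow> real \<Rightarrow> ('e \<times> 'e) set) \<Rightarrow> ereal" where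
  "comp_rate S = Lim (at_right (0::real))
     (\<lambda>\<epsilon>. limsup (\<lambda>N. ereal (real (LEAST M. S N M \<epsilon> \<noteq> {}) / real N)))"

definition I_F :: "('s,'e) opt \<Rightarrow> 's \<Rightarrow> 's \<Rightarrow> 'e \<Rightarrow> ereal" where
  "I_F T Ob A \<rho> = comp_rate (schemes_F T Ob A \<rho>)"

definition I_dil :: "('s,'e) opt \<Rightarrow> 's \<Rightarrow> 's \<Rightarrow> 'e \<Rightarrow> ereal" where
  "I_dil T Ob A \<rho> = comp_rate (schemes_dil T Ob A \<rho>)"

end

theory Submission
  imports Defs
begin

lemma opt_ax:
  assumes "OPT T"
  shows "(\<forall>f g. scod T f = sdom T g \<longrightarrow> sdom T (seq T g f) = sdom T f \<and> scod T (seq T g f) = scod T g)"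
   and "(\<forall>f g h. scod T f = sdom T g \<and> scod T g = sdom T h \<longrightarrow> seq T h (seq T g f) = seq T (seq T h g) f)"
   and "(\<forall>A. sdom T (ident T A) = A \<and> scod T (ident T A) = A)"
   and "(\<forall>f. seq T (ident T (scod T f)) f = f \<and> seq T f (ident T (sdom T f)) = f)"
   and "(\<forall>A B C. psys T A (psys T B C) = psys T (psys T A B) C)"
   and "(\<forall>A. psys T (triv T) A = A \<and> psys T A (triv T) = A)"
   and "(\<forall>f g. sdom T (par T f g) = psys T (sdom T f) (sdom T g) \<and> scod T (par T f g) = psys T (scod T f) (scod T g))"
   and "(\<forall>f g h. par T f (par T g h) = par T (par T f g) h)"
   and "(\<forall>f. par T (ident T (triv T)) f = f \<and> par T f (ident T (triv T)) = f)"
   and "(\<forall>A B. par T (ident T A) (ident T B) = ident T (psys T A B))"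
   and "(\<forall>f1 f2 g1 g2. scod T f1 = sdom T g1 \<and> scod T f2 = sdom T g2 \<longrightarrow> par T (seq T g1 f1) (seq T g2 f2) = seq T (par T g1 g2) (par T f1 f2))"
   and "(\<forall>A B. sdom T (swap T A B) = psys T A B \<and> scod T (swap T A B) = psys T B A)"
   and "(\<forall>A B. seq T (swap T B A) (swap T A B) = ident T (psys T A B))"
   and "(\<forall>f g. seq T (swap T (scod T f) (scod T g)) (par T f g) = seq T (par T g f) (swap T (sdom T f) (sdom T g)))"
   and "(\<forall>p q. sdom T p = triv T \<and> scod T p = triv T \<and> sdom T q = triv T \<and> scod T q = triv T \<longrightarrow> prb T (seq T p q) = prb T p * prb T q \<and> prb T (par T p q) = prb T p * prb T q)"
   and "(\<forall>p q. cg_ok T p q \<and> sdom T p = triv T \<and> scod T p = triv T \<longrightarrow> prb T (cg T p q) = prb T p + prb T q)"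
   and "(\<forall>t\<in>tests T. t \<noteq> [] \<and> (\<forall>f\<in>set t. \<forall>g\<in>set t. sdom T f = sdom T g \<and> scod T f = scod T g))"
   and "(\<forall>t. is_test T t (triv T) (triv T) \<longrightarrow> (\<forall>p\<in>set t. 0 \<le> prb T p) \<and> sum_list (map (prb T) t) = 1)"
   and "(\<forall>A. [ident T A] \<in> tests T)"
   and "(\<forall>A B. [swap T A B] \<in> tests T)"
   and "(\<forall>t u A B C. is_test T t A B \<and> is_test T u B C \<longrightarrow> concat (map (\<lambda>f. map (\<lambda>g. seq T g f) u) t) \<in> tests T)"
   and "(\<forall>t u. t \<in> tests T \<and> u \<in> tests T \<longrightarrow> concat (map (\<lambda>f. map (\<lambda>g. par T f g) u) t) \<in> tests T)"
   and "(\<forall>t i j. t \<in> tests T \<and> i < length t \<and> j < length t \<and> i \<noteq> j \<longrightarrow> cg T (t!i) (t!j) # map (\<lambda>k. t!k) (filter (\<lambda>k. k \<noteq> i \<and> k \<noteq> j) [0..<length t]) \<in> tests T)"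
   and "(\<forall>f g. cg_ok T f g \<longrightarrow> sdom T (cg T f g) = sdom T f \<and> scod T (cg T f g) = scod T f)"
   and "(\<forall>f g h. cg_ok T f g \<and> scod T f = sdom T h \<and> scod T g = sdom T h \<longrightarrow> seq T h (cg T f g) = cg T (seq T h f) (seq T h g))"
   and "(\<forall>f g h. cg_ok T f g \<and> scod T h = sdom T f \<and> scod T h = sdom T g \<longrightarrow> seq T (cg T f g) h = cg T (seq T f h) (seq T g h))"
   and "(\<forall>f g h. cg_ok T f g \<longrightarrow> par T (cg T f g) h = cg T (par T f h) (par T g h) \<and> par T h (cg T f g) = cg T (par T h f) (par T h g))"
   and "(\<forall>f g A B. f \<in> Tr T A B \<and> g \<in> Tr T A B \<and> (\<forall>E \<Psi> a. \<Psi> \<in> St T (psys T A E) \<and> a \<in> Eff T (psys T B E) \<longrightarrow> pairing T a (seq T (par T f (ident T E)) \<Psi>) = pairing T a (seq T (par T g (ident T E)) \<Psi>)) \<longrightarrow> f = g)"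
  using assms unfolding OPT_def apply - apply (elim conjE, assumption)+ done

context fixes T :: "('s,'e) opt" assumes opt: "OPT T"
begin
lemmas ax = opt_ax[OF opt]
lemma seq_dom: "scod T f = sdom T g \<Longrightarrow> sdom T (seq T g f) = sdom T f \<and> scod T (seq T g f) = scod T g"
  using ax(1) by blast
lemma seq_assoc: "scod T f = sdom T g \<Longrightarrow> scod T g = sdom T h \<Longrightarrow> seq T h (seq T g f) = seq T (seq T h g) f"
  using ax(2) by blast
lemma ident_dom[simp]: "sdom T (ident T A) = A" "scod T (ident T A) = A"
  using ax(3) by blast+
lemma ident_unit: "seq T (ident T (scod T f)) f = f" "seq T f (ident T (sdom T f)) = f"
  using ax(4) by blast+
lemma psys_triv[simp]: "psys T (triv T) A = A" "psys T A (triv T) = A"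
  using ax(6) by blast+
lemma par_dom[simp]: "sdom T (par T f g) = psys T (sdom T f) (sdom T g)" "scod T (par T f g) = psys T (scod T f) (scod T g)"
  using ax(7) by blast+
lemma par_ident: "par T (ident T A) (ident T B) = ident T (psys T A B)"
  using ax(10) by blast
lemma prb_cg: "cg_ok T p q \<Longrightarrow> sdom T p = triv T \<Longrightarrow> scod T p = triv T \<Longrightarrow> prb T (cg T p q) = prb T p + prb T q"
  using ax(16) by blast
lemma prob_test: "is_test T t (triv T) (triv T) \<Longrightarrow> (\<forall>p\<in>set t. 0 \<le> prb T p) \<and> sum_list (map (prb T) t) = 1"
  using ax(18) by blast
lemma ident_test: "[ident T A] \<in> tests T"
  using ax(19) by blast
lemma seq_test: "is_test T t A B \<Longrightarrow> is_test T u B C \<Longrightarrow> concat (map (\<lambda>f. map (\<lambda>g. seq T g f) u) t) \<in> tests T"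
  using ax(21) by blast
lemma par_test: "t \<in> tests T \<Longrightarrow> u \<in> tests T \<Longrightarrow> concat (map (\<lambda>f. map (\<lambda>g. par T f g) u) t) \<in> tests T"
  using ax(22) by blast
lemma cg_test: "t \<in> tests T \<Longrightarrow> i < length t \<Longrightarrow> j < length t \<Longrightarrow> i \<noteq> j \<Longrightarrow>
        cg T (t!i) (t!j) # map (\<lambda>k. t!k) (filter (\<lambda>k. k \<noteq> i \<and> k \<noteq> j) [0..<length t]) \<in> tests T"
  using ax(23) by blast
lemma cg_dom: "cg_ok T f g \<Longrightarrow> sdom T (cg T f g) = sdom T f \<and> scod T (cg T f g) = scod T f"
  using ax(24) by blast
lemma seq_cg: "cg_ok T f g \<Longrightarrow> scod T h = sdom T f \<Longrightarrow> scod T h = sdom T g \<Longrightarrow>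
        seq T (cg T f g) h = cg T (seq T f h) (seq T g h)"
  using ax(26) by blast
lemma test_dom: "is_test T t A B \<Longrightarrow> f \<in> set t \<Longrightarrow> sdom T f = A \<and> scod T f = B"
  unfolding is_test_def by blast
lemma seq_is_test: "is_test T t A B \<Longrightarrow> is_test T u B C \<Longrightarrow> is_test T (concat (map (\<lambda>f. map (\<lambda>g. seq T g f) u) t)) A C"
  using seq_test[of t A B u C] seq_dom unfolding is_test_def by auto
lemma Tr1_iff: "f \<in> Tr1 T A B \<longleftrightarrow> is_test T [f] A B" by (simp add: Tr1_def)
lemma Tr1_seq: "f \<in> Tr1 T A B \<Longrightarrow> g \<in> Tr1 T B C \<Longrightarrow> seq T g f \<in> Tr1 T A C"
  using seq_is_test[of "[f]" A B "[g]" C] unfolding Tr1_def by simp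
lemma Tr1_par: "f \<in> Tr1 T A B \<Longrightarrow> g \<in> Tr1 T C D \<Longrightarrow> par T f g \<in> Tr1 T (psys T A C) (psys T B D)"
  using par_test[of "[f]" "[g]"] unfolding Tr1_def is_test_def by simp
lemma Tr1_ident: "ident T A \<in> Tr1 T A A"
  using ident_test unfolding Tr1_def is_test_def by simp
lemma Tr1_Tr: "f \<in> Tr1 T A B \<Longrightarrow> f \<in> Tr T A B"
  unfolding Tr1_def Tr_def by force
lemma Tr_dom: "f \<in> Tr T A B \<Longrightarrow> sdom T f = A \<and> scod T f = B"
  unfolding Tr_def is_test_def by blast
lemma Tr1_dom: "f \<in> Tr1 T A B \<Longrightarrow> sdom T f = A \<and> scod T f = B"
  unfolding Tr1_def is_test_def by simp
lemma Tr_seq: "f \<in> Tr T A B \<Longrightarrow> g \<in> Tr T B C \<Longrightarrow> seq T g f \<in> Tr T A C"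
proof -
  assume "f \<in> Tr T A B" "g \<in> Tr T B C"
  then obtain t u where t: "is_test T t A B" "f \<in> set t" and u: "is_test T u B C" "g \<in> set u"
    unfolding Tr_def by blast
  have "seq T g f \<in> set (concat (map (\<lambda>f. map (\<lambda>g. seq T g f) u) t))" using t u by auto
  then show ?thesis using seq_is_test[OF t(1) u(1)] unfolding Tr_def by blast
qed

lemma pairing_nonneg: "a \<in> Eff T A \<Longrightarrow> \<Phi> \<in> St T A \<Longrightarrow> 0 \<le> pairing T a \<Phi>"
proof -
  assume "a \<in> Eff T A" "\<Phi> \<in> St T A"
  then obtain t u where t: "is_test T t (triv T) A" "\<Phi> \<in> set t" and u: "is_test T u A (triv T)" "a \<in> set u"
    unfolding Tr_def Eff_def St_def by blast
  have "seq T a \<Phi> \<in> set (concat (map (\<lambda>f. map (\<lambda>g. seq T g f) u) t))" using t u by auto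
  then show ?thesis using prob_test[OF seq_is_test[OF t(1) u(1)]] unfolding pairing_def by blast
qed
lemma pairing_cg:
  assumes t: "is_test T t A (triv T)" and ij: "i < length t" "j < length t" "i \<noteq> j"
    and Phi: "\<Phi> \<in> St T A"
  shows "pairing T (cg T (t!i) (t!j)) \<Phi> = pairing T (t!i) \<Phi> + pairing T (t!j) \<Phi>"
proof -
  obtain t0 where t0: "is_test T t0 (triv T) A" "\<Phi> \<in> set t0"
    using Phi unfolding St_def Tr_def by blast
  have ok: "cg_ok T (t!i) (t!j)" unfolding cg_ok_def using t ij unfolding is_test_def by blast
  have dom: "sdom T (t!i) = A" "sdom T (t!j) = A" "scod T (t!i) = triv T"
    using t ij nth_mem unfolding is_test_def by blast+
  have sP: "scod T \<Phi> = A" "sdom T \<Phi> = triv T" using t0 unfolding is_test_def by blast+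
  have e1: "seq T (cg T (t!i) (t!j)) \<Phi> = cg T (seq T (t!i) \<Phi>) (seq T (t!j) \<Phi>)"
    using seq_cg[OF ok] sP dom by simp
  define F where "F = (\<lambda>f. map (\<lambda>g. seq T g f) t)"
  define u where "u = concat (map F t0)"
  have ut: "u \<in> tests T" using seq_test[OF t0(1) t] unfolding u_def F_def by simp
  obtain xs ys where t0s: "t0 = xs @ \<Phi> # ys" using t0(2) by (meson split_list)
  define L where "L = length (concat (map F xs))"
  have us: "u = concat (map F xs) @ F \<Phi> @ concat (map F ys)" unfolding u_def t0s by simp
  have lF: "length (F \<Phi>) = length t" unfolding F_def by simp
  have ui: "u ! (L + i) = seq T (t!i) \<Phi>" "u ! (L + j) = seq T (t!j) \<Phi>"
    unfolding us L_def using ij lF by (simp_all add: nth_append F_def)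
  have ul: "L + i < length u" "L + j < length u" unfolding us L_def using ij lF by simp_all
  have ok2: "cg_ok T (seq T (t!i) \<Phi>) (seq T (t!j) \<Phi>)"
    unfolding cg_ok_def using ut ul ui ij by (metis add_left_cancel)
  have d2: "sdom T (seq T (t!i) \<Phi>) = triv T" "scod T (seq T (t!i) \<Phi>) = triv T"
    using seq_dom[of \<Phi> "t!i"] sP dom by simp_all
  show ?thesis unfolding pairing_def e1 using prb_cg[OF ok2 d2] .
qed
end


context fixes T :: "('s,'e) opt" assumes opt: "OPT T"
begin

lemma merge:
  assumes "is_test T t A (triv T)" "S \<subseteq> {..<length t}" "S \<noteq> {}"
  shows "\<exists>t' i. is_test T t' A (triv T) \<and> i < length t' \<and>
     (\<forall>\<Phi>\<in>St T A. pairing T (t'!i) \<Phi> = (\<Sum>k\<in>S. pairing T (t!k) \<Phi>)) \<and>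
     (S = {..<length t} \<longrightarrow> length t' = 1)"
  using assms
proof (induction "card S" arbitrary: t S rule: less_induct)
  case less
  have finS: "finite S" using less.prems(2) finite_subset by blast
  show ?case
  proof (cases "card S = 1")
    case True
    then obtain k where S: "S = {k}" using card_1_singletonE by blast
    have "k < length t" using less.prems S by auto
    moreover have "S = {..<length t} \<longrightarrow> length t = 1" using True by auto
    ultimately show ?thesis using less.prems(1) S by auto
  next
    case False
    have "card S > 0" using less.prems(3) finS by (simp add: card_gt_0_iff)
    then have "card S \<ge> 2" using False by linarith
    then have "\<exists>i\<in>S. \<exists>j\<in>S. i \<noteq> j" using card_le_Suc0_iff_eq[OF finS] by auto
    then obtain i j where ij: "i \<in> S" "j \<in> S" "i \<noteq> j" by blast
    have il: "i < length t" "j < length t" using ij less.prems(2) by auto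
    define fl where "fl = filter (\<lambda>k. k \<noteq> i \<and> k \<noteq> j) [0..<length t]"
    define t1 where "t1 = cg T (t!i) (t!j) # map (\<lambda>k. t!k) fl"
    define M where "M = {m. m < length fl \<and> fl!m \<in> S}"
    define S1 where "S1 = insert 0 (Suc ` M)"
    have dfl: "distinct fl" unfolding fl_def by simp
    have sfl: "set fl = {k. k < length t \<and> k \<noteq> i \<and> k \<noteq> j}" unfolding fl_def by auto
    have injM: "inj_on (nth fl) M" using inj_on_nth[OF dfl] unfolding M_def by auto
    have imM: "nth fl ` M = S - {i,j}"
    proof
      show "nth fl ` M \<subseteq> S - {i, j}" unfolding M_def using sfl nth_mem by fastforce
      show "S - {i, j} \<subseteq> nth fl ` M"
      proof
        fix k assume k: "k \<in> S - {i,j}"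
        then have "k \<in> set fl" using sfl less.prems(2) by auto
        then obtain m where "m < length fl" "fl!m = k" by (metis in_set_conv_nth)
        then show "k \<in> nth fl ` M" unfolding M_def using k by auto
      qed
    qed
    have finM: "finite M" unfolding M_def by simp
    have cM: "card M = card (S - {i,j})" using card_image[OF injM] imM by simp
    have cS1: "card S1 = Suc (card M)" unfolding S1_def using finM
      by (simp add: card_image)
    have "card (S - {i,j}) = card S - 2" using ij finS by (simp add: card_Diff_subset)
    then have lt: "card S1 < card S" using cS1 cM \<open>card S \<ge> 2\<close> by simp
    have ok: "cg_ok T (t!i) (t!j)" unfolding cg_ok_def using less.prems(1) ij il unfolding is_test_def by blast
    have t1test: "is_test T t1 A (triv T)"
    proof -
      have "t \<in> tests T" using less.prems(1) unfolding is_test_def by blast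
      then have "t1 \<in> tests T" unfolding t1_def fl_def using cg_test[OF opt _ il ij(3)] by blast
      moreover have "\<forall>f\<in>set t1. sdom T f = A \<and> scod T f = triv T"
      proof
        fix f assume "f \<in> set t1"
        then consider "f = cg T (t!i) (t!j)" | "f \<in> set (map (\<lambda>k. t!k) fl)" unfolding t1_def by auto
        then show "sdom T f = A \<and> scod T f = triv T"
        proof cases
          case 1 then show ?thesis using cg_dom[OF opt ok] less.prems(1) il nth_mem unfolding is_test_def by metis
        next
          case 2 then show ?thesis using sfl less.prems(1) nth_mem unfolding is_test_def by auto
        qed
      qed
      ultimately show ?thesis unfolding is_test_def by blast
    qed
    have S1sub: "S1 \<subseteq> {..<length t1}" unfolding S1_def M_def t1_def by auto
    obtain t' i' where IH: "is_test T t' A (triv T)" "i' < length t'"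
      "\<forall>\<Phi>\<in>St T A. pairing T (t'!i') \<Phi> = (\<Sum>k\<in>S1. pairing T (t1!k) \<Phi>)"
      "S1 = {..<length t1} \<longrightarrow> length t' = 1"
      using less.hyps[OF lt t1test S1sub] unfolding S1_def by blast
    have sums: "(\<Sum>k\<in>S1. pairing T (t1!k) \<Phi>) = (\<Sum>k\<in>S. pairing T (t!k) \<Phi>)" if Phi: "\<Phi> \<in> St T A" for \<Phi>
    proof -
      have "(\<Sum>k\<in>S1. pairing T (t1!k) \<Phi>) = pairing T (t1!0) \<Phi> + (\<Sum>k\<in>Suc ` M. pairing T (t1!k) \<Phi>)"
        unfolding S1_def using finM by (simp add: sum.insert)
      also have "(\<Sum>k\<in>Suc ` M. pairing T (t1!k) \<Phi>) = (\<Sum>m\<in>M. pairing T (t!(fl!m)) \<Phi>)"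
        by (simp add: sum.reindex t1_def M_def)
      also have "\<dots> = (\<Sum>k\<in>S - {i,j}. pairing T (t!k) \<Phi>)"
        using sum.reindex[OF injM, of "\<lambda>k. pairing T (t!k) \<Phi>"] imM by simp
      also have "pairing T (t1!0) \<Phi> = pairing T (t!i) \<Phi> + pairing T (t!j) \<Phi>"
        unfolding t1_def using pairing_cg[OF opt less.prems(1) il ij(3) Phi] by simp
      finally show ?thesis using ij finS
        by (simp add: sum.remove[of S i] sum.remove[of "S - {i}" j] insert_Diff_if) (metis Diff_insert2 add.assoc)
    qed
    have allc: "S = {..<length t} \<longrightarrow> S1 = {..<length t1}"
    proof
      assume Sall: "S = {..<length t}"
      have "M = {..<length fl}" unfolding M_def Sall using sfl nth_mem by fastforce
      then show "S1 = {..<length t1}" unfolding S1_def t1_def using lessThan_Suc_eq_insert_0 by auto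
    qed
    show ?thesis using IH sums allc by metis
  qed
qed
end


context fixes T :: "('s,'e) opt" assumes opt: "OPT T" and sc: "strongly_causal T"
begin

lemma det_in: "det_eff T A \<in> Tr1 T A (triv T)"
proof -
  have "\<exists>!e. e \<in> Tr1 T A (triv T)" using sc unfolding strongly_causal_def by blast
  then show ?thesis unfolding det_eff_def by (rule theI')
qed

lemma det_uniq: "f \<in> Tr1 T A (triv T) \<Longrightarrow> f = det_eff T A"
proof -
  assume f: "f \<in> Tr1 T A (triv T)"
  have "\<exists>!e. e \<in> Tr1 T A (triv T)" using sc unfolding strongly_causal_def by blast
  then show ?thesis using f det_in by blast
qed

lemma det_Eff: "det_eff T A \<in> Eff T A"
  using Tr1_Tr[OF opt det_in] unfolding Eff_def .

lemma pairing_sum: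
  assumes t: "is_test T t A (triv T)" and Phi: "\<Phi> \<in> St T A"
  shows "(\<Sum>k<length t. pairing T (t!k) \<Phi>) = pairing T (det_eff T A) \<Phi>"
proof -
  have "t \<noteq> []" using opt_ax(17)[OF opt] t unfolding is_test_def by blast
  then have ne: "{..<length t} \<noteq> {}" by auto
  obtain t' i where m: "is_test T t' A (triv T)" "i < length t'"
     "\<forall>\<Phi>\<in>St T A. pairing T (t'!i) \<Phi> = (\<Sum>k\<in>{..<length t}. pairing T (t!k) \<Phi>)"
     "length t' = 1"
    using merge[OF opt t subset_refl ne] by blast
  then obtain a where a: "t' = [a]" by (metis One_nat_def length_0_conv length_Suc_conv)
  then have "a \<in> Tr1 T A (triv T)" using m(1) unfolding Tr1_def by simp
  then have "a = det_eff T A" by (rule det_uniq)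
  then show ?thesis using m(2,3) Phi a by simp
qed

lemma pairing_le1:
  assumes a: "a \<in> Eff T A" and Phi: "\<Phi> \<in> St T A" and n: "pairing T (det_eff T A) \<Phi> = 1"
  shows "pairing T a \<Phi> \<le> 1"
proof -
  obtain t where t: "is_test T t A (triv T)" "a \<in> set t" using a unfolding Eff_def Tr_def by blast
  then obtain i where i: "i < length t" "t!i = a" by (meson in_set_conv_nth)
  have nn: "\<forall>k\<in>{..<length t}. 0 \<le> pairing T (t!k) \<Phi>"
  proof
    fix k assume "k \<in> {..<length t}"
    then have "t!k \<in> Eff T A" using t(1) nth_mem unfolding Eff_def Tr_def by fastforce
    then show "0 \<le> pairing T (t!k) \<Phi>" using pairing_nonneg[OF opt _ Phi] by blast
  qed
  have "pairing T a \<Phi> \<le> (\<Sum>k<length t. pairing T (t!k) \<Phi>)"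
    using member_le_sum[of i "{..<length t}" "\<lambda>k. pairing T (t!k) \<Phi>"] nn i by auto
  then show ?thesis using pairing_sum[OF t(1) Phi] n by simp
qed

lemma ev_pow_St1: "\<rho> \<in> St1 T A \<Longrightarrow> ev_pow T \<rho> N \<in> St1 T (sys_pow T A N)"
proof (induction N)
  case 0
  then show ?case using Tr1_ident[OF opt, of "triv T"] unfolding St1_def by simp
next
  case (Suc N)
  then have "par T \<rho> (ev_pow T \<rho> N) \<in> Tr1 T (psys T (triv T) (triv T)) (psys T A (sys_pow T A N))"
    using Tr1_par[OF opt, of \<rho> "triv T" A "ev_pow T \<rho> N" "triv T" "sys_pow T A N"] unfolding St1_def by simp
  then show ?case unfolding St1_def using psys_triv[OF opt] by simp
qed

context
  fixes X C Ch rN \<Psi>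
  assumes rN: "rN \<in> St1 T X" and Ch: "Ch \<in> Tr1 T X X" and dil: "(C, \<Psi>) \<in> dilations T X rN"
begin

lemma Psi_St: "\<Psi> \<in> St T (psys T X C)"
  using dil unfolding dilations_def by simp

lemma Psi'_St: "seq T (par T Ch (ident T C)) \<Psi> \<in> St T (psys T X C)"
proof -
  have "par T Ch (ident T C) \<in> Tr1 T (psys T X C) (psys T X C)"
    using Tr1_par[OF opt Ch Tr1_ident[OF opt]] .
  then show ?thesis using Tr_seq[OF opt Psi_St[unfolded St_def] Tr1_Tr[OF opt]] unfolding St_def by simp
qed

lemma Psi_norm: "pairing T (det_eff T (psys T X C)) \<Psi> = 1"
proof -
  define Q where "Q = par T (ident T X) (det_eff T C)"
  have Q0: "Q \<in> Tr1 T (psys T X C) (psys T X (triv T))"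
    unfolding Q_def by (rule Tr1_par[OF opt Tr1_ident[OF opt] det_in])
  have Q: "Q \<in> Tr1 T (psys T X C) X" using Q0 psys_triv(2)[OF opt, of X] by simp
  have "seq T (det_eff T X) Q \<in> Tr1 T (psys T X C) (triv T)" using Tr1_seq[OF opt Q det_in] .
  then have eY: "det_eff T (psys T X C) = seq T (det_eff T X) Q" using det_uniq by metis
  have sQ: "seq T Q \<Psi> = rN" using dil unfolding dilations_def Q_def by simp
  have dP: "scod T \<Psi> = psys T X C" using Tr_dom[OF opt] Psi_St unfolding St_def by blast
  have d1: "scod T \<Psi> = sdom T Q" "scod T Q = sdom T (det_eff T X)"
    using dP Tr1_dom[OF opt Q] Tr1_dom[OF opt det_in[of X]] by simp_all
  have "seq T (det_eff T (psys T X C)) \<Psi> = seq T (det_eff T X) rN"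
    unfolding eY sQ[symmetric] using seq_assoc[OF opt d1] by simp
  moreover have "seq T (det_eff T X) rN \<in> Tr1 T (triv T) (triv T)"
    using Tr1_seq[OF opt rN[unfolded St1_def] det_in] .
  then have "sum_list (map (prb T) [seq T (det_eff T X) rN]) = 1"
    using prob_test[OF opt, of "[seq T (det_eff T X) rN]"] unfolding Tr1_def by simp
  ultimately show ?thesis unfolding pairing_def by simp
qed

lemma Psi'_norm: "pairing T (det_eff T (psys T X C)) (seq T (par T Ch (ident T C)) \<Psi>) = 1"
proof -
  define P where "P = par T Ch (ident T C)"
  have P: "P \<in> Tr1 T (psys T X C) (psys T X C)"
    unfolding P_def using Tr1_par[OF opt Ch Tr1_ident[OF opt]] .
  have "seq T (det_eff T (psys T X C)) P \<in> Tr1 T (psys T X C) (triv T)" using Tr1_seq[OF opt P det_in] .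
  then have e: "seq T (det_eff T (psys T X C)) P = det_eff T (psys T X C)" by (rule det_uniq)
  have dP: "scod T \<Psi> = psys T X C" using Tr_dom[OF opt] Psi_St unfolding St_def by blast
  have d1: "scod T \<Psi> = sdom T P" "scod T P = sdom T (det_eff T (psys T X C))"
    using dP Tr1_dom[OF opt P] Tr1_dom[OF opt det_in[of "psys T X C"]] by simp_all
  have "seq T (det_eff T (psys T X C)) (seq T P \<Psi>) = seq T (det_eff T (psys T X C)) \<Psi>"
    using seq_assoc[OF opt d1] e by simp
  then show ?thesis using Psi_norm unfolding pairing_def P_def by simp
qed

end
end


lemma sqrt2_le:
  fixes a b c d :: real
  assumes "0 \<le> a" "0 \<le> b" "0 \<le> c" "0 \<le> d"
  shows "sqrt (a*b) + sqrt (c*d) \<le> sqrt ((a+c)*(b+d))"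
proof -
  have am: "2 * sqrt (a*d) * sqrt (c*b) \<le> a*d + c*b"
  proof -
    have "0 \<le> (sqrt (a*d) - sqrt (c*b))^2" by simp
    then show ?thesis using assms by (simp add: power2_eq_square algebra_simps)
  qed
  have e1: "(sqrt (a*b) + sqrt (c*d))^2 = a*b + c*d + 2 * (sqrt (a*b) * sqrt (c*d))"
    using assms by (simp add: power2_eq_square algebra_simps)
  have e2: "sqrt (a*b) * sqrt (c*d) = sqrt (a*d) * sqrt (c*b)"
    by (simp add: real_sqrt_mult[symmetric] mult_ac)
  from e1 e2 have "(sqrt (a*b) + sqrt (c*d))^2 \<le> (a+c)*(b+d)" using am by (simp add: algebra_simps)
  then show ?thesis using assms by (simp add: real_le_rsqrt)
qed

lemma sum_sqrt_le:
  fixes x y :: "nat \<Rightarrow> real"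
  assumes "finite K" "\<forall>k\<in>K. 0 \<le> x k \<and> 0 \<le> y k"
  shows "(\<Sum>k\<in>K. sqrt (x k * y k)) \<le> sqrt ((\<Sum>k\<in>K. x k) * (\<Sum>k\<in>K. y k))"
  using assms
proof (induction K rule: finite_induct)
  case empty then show ?case by simp
next
  case (insert k K)
  have "(\<Sum>k\<in>insert k K. sqrt (x k * y k)) = sqrt (x k * y k) + (\<Sum>k\<in>K. sqrt (x k * y k))"
    using insert by simp
  also have "\<dots> \<le> sqrt (x k * y k) + sqrt ((\<Sum>k\<in>K. x k) * (\<Sum>k\<in>K. y k))"
    using insert by simp
  also have "\<dots> \<le> sqrt ((x k + (\<Sum>k\<in>K. x k)) * (y k + (\<Sum>k\<in>K. y k)))"
    using insert by (intro sqrt2_le) (auto intro: sum_nonneg)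
  finally show ?case using insert by simp
qed

lemma two_point:
  fixes p q F :: real
  assumes "0 \<le> p" "p \<le> 1" "0 \<le> q" "q \<le> 1" "0 \<le> F"
    and "F \<le> sqrt (p*q) + sqrt ((1-p)*(1-q))"
  shows "q - p \<le> sqrt (1 - F^2)"
proof -
  define a b c d where "a = sqrt p" "b = sqrt q" "c = sqrt (1-p)" "d = sqrt (1-q)"
  have sq: "a^2 = p" "b^2 = q" "c^2 = 1-p" "d^2 = 1-q" using assms unfolding a_b_c_d_def by simp_all
  have nn: "0 \<le> a" "0 \<le> b" "0 \<le> c" "0 \<le> d" using assms unfolding a_b_c_d_def by simp_all
  have s: "sqrt (p*q) + sqrt ((1-p)*(1-q)) = a*b + c*d" using assms unfolding a_b_c_d_def by (simp add: real_sqrt_mult)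
  have id1: "(a*b + c*d)^2 + (a*d - b*c)^2 = 1"
  proof -
    have "(a*b + c*d)^2 + (a*d - b*c)^2 = (a^2+c^2)*(b^2+d^2)" by (simp add: power2_eq_square algebra_simps)
    then show ?thesis using sq by simp
  qed
  have cs: "(a*d + b*c)^2 \<le> 1"
  proof -
    have "(a*d + b*c)^2 + (a*b - c*d)^2 = (a^2+c^2)*(b^2+d^2)" by (simp add: power2_eq_square algebra_simps)
    then have "(a*d + b*c)^2 + (a*b - c*d)^2 = 1" using sq by simp
    then show ?thesis by (smt (verit) zero_le_power2)
  qed
  have diff: "p - q = (a*d - b*c) * (a*d + b*c)"
  proof -
    have "p - q = a^2 * (b^2+d^2) - b^2 * (a^2 + c^2)" using sq by simp
    also have "\<dots> = (a*d - b*c) * (a*d + b*c)" by (simp add: power2_eq_square algebra_simps)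
    finally show ?thesis .
  qed
  have "(p - q)^2 \<le> (a*d - b*c)^2"
  proof -
    have "(p-q)^2 = (a*d - b*c)^2 * (a*d + b*c)^2" using diff by (simp add: power_mult_distrib)
    also have "\<dots> \<le> (a*d - b*c)^2 * 1" using cs by (intro mult_left_mono) auto
    finally show ?thesis by simp
  qed
  moreover have "F^2 \<le> (a*b + c*d)^2" using assms(5,6) s by (simp add: power_mono)
  ultimately have "(q-p)^2 \<le> 1 - F^2" using id1 by (simp add: power2_commute)
  then show ?thesis using real_le_rsqrt by (smt (verit) real_sqrt_abs real_sqrt_le_mono)
qed

lemma min_le_sqrt:
  fixes p q :: real
  assumes "0 \<le> p" "0 \<le> q"
  shows "min p q \<le> sqrt (p*q)"
proof -
  have "(min p q)^2 \<le> p*q" using assms by (cases "p \<le> q") (auto simp: power2_eq_square intro: mult_mono)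
  then show ?thesis using assms by (simp add: real_le_rsqrt)
qed


context fixes T :: "('s,'e) opt" assumes opt: "OPT T" and sc: "strongly_causal T"
begin

context
  fixes X C Ch rN \<Psi>
  assumes rN: "rN \<in> St1 T X" and Ch: "Ch \<in> Tr1 T X X" and dil: "(C, \<Psi>) \<in> dilations T X rN"
begin

abbreviation "Y \<equiv> psys T X C"
abbreviation "\<Psi>' \<equiv> seq T (par T Ch (ident T C)) \<Psi>"
abbreviation "fsum t \<equiv> sum_list (map (\<lambda>a. sqrt (pairing T a \<Psi> * pairing T a \<Psi>')) t)"

lemmas PS = Psi_St[OF opt sc rN Ch dil] Psi'_St[OF opt sc rN Ch dil]
lemmas PN = Psi_norm[OF opt sc rN Ch dil] Psi'_norm[OF opt sc rN Ch dil]

lemma eff_props: "a \<in> Eff T Y \<Longrightarrow> 0 \<le> pairing T a \<Psi> \<and> pairing T a \<Psi> \<le> 1 \<and> 0 \<le> pairing T a \<Psi>' \<and> pairing T a \<Psi>' \<le> 1"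
  using pairing_nonneg[OF opt _ PS(1)] pairing_nonneg[OF opt _ PS(2)]
    pairing_le1[OF opt sc _ PS(1) PN(1)] pairing_le1[OF opt sc _ PS(2) PN(2)] by blast

lemma test_eff: "is_test T t Y (triv T) \<Longrightarrow> k < length t \<Longrightarrow> t!k \<in> Eff T Y"
  unfolding Eff_def Tr_def using nth_mem by blast

lemma fsum_eq: "fsum t = (\<Sum>k<length t. sqrt (pairing T (t!k) \<Psi> * pairing T (t!k) \<Psi>'))"
  by (simp add: sum_list_sum_nth atLeast0LessThan)

lemma fsum_nonneg: "is_test T t Y (triv T) \<Longrightarrow> 0 \<le> fsum t"
  unfolding fsum_eq by (intro sum_nonneg) (simp add: eff_props[OF test_eff])

lemma tests_ne: "{t. is_test T t Y (triv T)} \<noteq> {}"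
  using det_in[OF opt sc, of Y] unfolding Tr1_def by blast

lemma F_lower: "is_test T t Y (triv T) \<Longrightarrow> fidelity T Y \<Psi> \<Psi>' \<le> fsum t"
  unfolding fidelity_def
  by (rule cINF_lower) (auto intro!: bdd_belowI2[where m=0] fsum_nonneg)

lemma F_nonneg: "0 \<le> fidelity T Y \<Psi> \<Psi>'"
  unfolding fidelity_def using tests_ne by (intro cINF_greatest) (auto intro: fsum_nonneg)

lemma psum1: "is_test T t Y (triv T) \<Longrightarrow> (\<Sum>k<length t. pairing T (t!k) \<Psi>) = 1"
  using pairing_sum[OF opt sc _ PS(1)] PN(1) by simp
lemma psum2: "is_test T t Y (triv T) \<Longrightarrow> (\<Sum>k<length t. pairing T (t!k) \<Psi>') = 1"
  using pairing_sum[OF opt sc _ PS(2)] PN(2) by simp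

lemma effB:
  assumes a: "a \<in> Eff T Y"
  shows "pairing T a \<Psi>' - pairing T a \<Psi> \<le> sqrt (1 - (fidelity T Y \<Psi> \<Psi>')^2)"
proof -
  obtain t where t: "is_test T t Y (triv T)" "a \<in> set t" using a unfolding Eff_def Tr_def by blast
  then obtain i where i: "i < length t" "t!i = a" by (meson in_set_conv_nth)
  define p where "p = (\<lambda>k. pairing T (t!k) \<Psi>)"
  define q where "q = (\<lambda>k. pairing T (t!k) \<Psi>')"
  define K where "K = {..<length t} - {i}"
  have nn: "\<forall>k\<in>K. 0 \<le> p k \<and> 0 \<le> q k" unfolding K_def p_def q_def using eff_props test_eff[OF t(1)] by auto
  have fK: "finite K" unfolding K_def by simp
  have spl: "\<And>f. (\<Sum>k<length t. f k) = f i + (\<Sum>k\<in>K. f k)" unfolding K_def using i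
    by (simp add: sum.remove)
  have "fidelity T Y \<Psi> \<Psi>' \<le> sqrt (p i * q i) + (\<Sum>k\<in>K. sqrt (p k * q k))"
    using F_lower[OF t(1)] unfolding fsum_eq spl p_def q_def .
  also have "\<dots> \<le> sqrt (p i * q i) + sqrt ((\<Sum>k\<in>K. p k) * (\<Sum>k\<in>K. q k))"
    using sum_sqrt_le[OF fK nn] by simp
  also have "(\<Sum>k\<in>K. p k) = 1 - p i" using psum1[OF t(1)] spl[of p] unfolding p_def by simp
  also have "(\<Sum>k\<in>K. q k) = 1 - q i" using psum2[OF t(1)] spl[of q] unfolding q_def by simp
  finally have F: "fidelity T Y \<Psi> \<Psi>' \<le> sqrt (p i * q i) + sqrt ((1 - p i) * (1 - q i))" .
  have "p i = pairing T a \<Psi>" "q i = pairing T a \<Psi>'" unfolding p_def q_def using i by simp_all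
  then show ?thesis using two_point[OF _ _ _ _ F_nonneg F] eff_props[OF a] by simp
qed

abbreviation "elt a \<equiv> (2 * pairing T a \<Psi>' - pairing T (det_eff T Y) \<Psi>') - (2 * pairing T a \<Psi> - pairing T (det_eff T Y) \<Psi>)"

lemma elt_eq: "elt a = 2 * (pairing T a \<Psi>' - pairing T a \<Psi>)"
  using PN by simp

lemma elt_bdd: "bdd_above (elt ` Eff T Y)"
  by (rule bdd_aboveI2[where M=2]) (use eff_props elt_eq in force)

lemma op_ge: "a \<in> Eff T Y \<Longrightarrow> elt a \<le> op_dist T Y \<Psi>' \<Psi>"
  unfolding op_dist_def by (rule cSUP_upper[OF _ elt_bdd])

lemma op_le: "op_dist T Y \<Psi>' \<Psi> \<le> 2 * sqrt (1 - (fidelity T Y \<Psi> \<Psi>')^2)"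
  unfolding op_dist_def
proof (rule cSUP_least)
  show "Eff T Y \<noteq> {}" using det_Eff[OF opt sc] by blast
  fix a assume "a \<in> Eff T Y"
  then have "elt a = 2 * (pairing T a \<Psi>' - pairing T a \<Psi>)"
     "pairing T a \<Psi>' - pairing T a \<Psi> \<le> sqrt (1 - (fidelity T Y \<Psi> \<Psi>')^2)"
    using effB elt_eq by blast+
  then show "elt a \<le> 2 * sqrt (1 - (fidelity T Y \<Psi> \<Psi>')^2)" by (smt (verit))
qed

lemma op_nonneg: "0 \<le> op_dist T Y \<Psi>' \<Psi>"
  using op_ge[OF det_Eff[OF opt sc]] elt_eq by simp

lemma fsumA:
  assumes t: "is_test T t Y (triv T)"
  shows "1 - op_dist T Y \<Psi>' \<Psi> / 2 \<le> fsum t"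
proof -
  define p where "p = (\<lambda>k. pairing T (t!k) \<Psi>)"
  define q where "q = (\<lambda>k. pairing T (t!k) \<Psi>')"
  define S where "S = {k. k < length t \<and> p k < q k}"
  have Ssub: "S \<subseteq> {..<length t}" unfolding S_def by auto
  have mins: "(\<Sum>k<length t. min (p k) (q k)) = 1 - (\<Sum>k\<in>S. q k - p k)"
  proof -
    have c: "min (p k) (q k) = q k - (if k \<in> S then q k - p k else 0)" if "k < length t" for k
      using that unfolding S_def by auto
    have "(\<Sum>k<length t. min (p k) (q k)) = (\<Sum>k<length t. q k - (if k \<in> S then q k - p k else 0))"
      by (rule sum.cong) (simp_all add: c)
    also have "\<dots> = (\<Sum>k<length t. q k) - (\<Sum>k<length t. (if k \<in> S then q k - p k else 0))"
      by (rule sum_subtractf)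
    also have "(\<Sum>k<length t. (if k \<in> S then q k - p k else 0)) = (\<Sum>k\<in>{..<length t} \<inter> S. q k - p k)"
      by (simp add: sum.inter_restrict)
    also have "{..<length t} \<inter> S = S" using Ssub by blast
    also have "(\<Sum>k<length t. q k) = 1" using psum2[OF t] unfolding q_def .
    finally show ?thesis .
  qed
  have lo: "(\<Sum>k\<in>S. q k - p k) \<le> op_dist T Y \<Psi>' \<Psi> / 2"
  proof (cases "S = {}")
    case True then show ?thesis using op_nonneg by simp
  next
    case False
    then obtain t' i where m: "is_test T t' Y (triv T)" "i < length t'"
       "\<forall>\<Phi>\<in>St T Y. pairing T (t'!i) \<Phi> = (\<Sum>k\<in>S. pairing T (t!k) \<Phi>)"
      using merge[OF opt t Ssub False] by blast
    have e1: "pairing T (t'!i) \<Psi> = (\<Sum>k\<in>S. p k)" using m(3) PS(1) unfolding p_def by blast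
    have e2: "pairing T (t'!i) \<Psi>' = (\<Sum>k\<in>S. q k)" using m(3) PS(2) unfolding q_def by blast
    have h1: "elt (t'!i) \<le> op_dist T Y \<Psi>' \<Psi>" using op_ge test_eff[OF m(1,2)] by blast
    have h2: "elt (t'!i) = 2 * (pairing T (t'!i) \<Psi>' - pairing T (t'!i) \<Psi>)" by (rule elt_eq)
    have h3: "2 * (pairing T (t'!i) \<Psi>' - pairing T (t'!i) \<Psi>) \<le> op_dist T Y \<Psi>' \<Psi>"
      using h1 unfolding h2 .
    have h4: "(\<Sum>k\<in>S. q k - p k) = (\<Sum>k\<in>S. q k) - (\<Sum>k\<in>S. p k)" by (rule sum_subtractf)
    have h5: "2 * ((\<Sum>k\<in>S. q k) - (\<Sum>k\<in>S. p k)) \<le> op_dist T Y \<Psi>' \<Psi>"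
      using h3 unfolding e1 e2 .
    show ?thesis unfolding h4 using h5 by (simp add: field_simps)
  qed
  have "(\<Sum>k<length t. min (p k) (q k)) \<le> (\<Sum>k<length t. sqrt (p k * q k))"
  proof (rule sum_mono)
    fix k assume "k \<in> {..<length t}"
    then have "t!k \<in> Eff T Y" using test_eff[OF t] by simp
    then show "min (p k) (q k) \<le> sqrt (p k * q k)" unfolding p_def q_def
      using min_le_sqrt eff_props by blast
  qed
  also have "\<dots> = fsum t" unfolding fsum_eq p_def q_def ..
  finally show ?thesis using mins lo by linarith
qed

lemma F_A: "1 - op_dist T Y \<Psi>' \<Psi> / 2 \<le> fidelity T Y \<Psi> \<Psi>'"
  unfolding fidelity_def using tests_ne by (intro cINF_greatest) (auto intro: fsumA)

end
end


lemma antitone_Lim: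
  fixes g :: "real \<Rightarrow> ereal"
  assumes anti: "\<And>e e'. 0 < e \<Longrightarrow> e \<le> e' \<Longrightarrow> g e' \<le> g e"
  shows "Lim (at_right 0) g = (SUP e\<in>{0<..}. g e)"
proof (rule tendsto_Lim)
  show "\<not> trivial_limit (at_right (0::real))" by simp
  show "(g \<longlongrightarrow> (SUP e\<in>{0<..}. g e)) (at_right 0)"
  proof (rule order_tendstoI)
    fix a assume "a < (SUP e\<in>{0<..}. g e)"
    then obtain e0 where e0: "0 < e0" "a < g e0" unfolding less_SUP_iff by auto
    show "\<forall>\<^sub>F x in at_right 0. a < g x"
      unfolding eventually_at_right_field
    proof (intro exI[of _ e0] conjI allI impI)
      fix y :: real assume y: "0 < y" "y < e0"
      have "g e0 \<le> g y" using anti[of y e0] y by simp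
      then show "a < g y" using e0(2) by simp
    qed (rule e0(1))
  next
    fix a assume a: "(SUP e\<in>{0<..}. g e) < a"
    show "\<forall>\<^sub>F x in at_right 0. g x < a"
      unfolding eventually_at_right_field
    proof (intro exI[of _ 1] conjI allI impI)
      fix y :: real assume "0 < y"
      then have "g y \<le> (SUP e\<in>{0<..}. g e)" by (intro SUP_upper) simp
      then show "g y < a" using a by simp
    qed simp
  qed
qed

definition LM :: "(nat \<Rightarrow> nat \<Rightarrow> real \<Rightarrow> 'x set) \<Rightarrow> nat \<Rightarrow> real \<Rightarrow> nat" where
  "LM S N e = (LEAST M. S N M e \<noteq> {})"

definition gL :: "(nat \<Rightarrow> nat \<Rightarrow> real \<Rightarrow> 'x set) \<Rightarrow> real \<Rightarrow> ereal" where
  "gL S e = limsup (\<lambda>N. ereal (real (LM S N e) / real N))"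

lemma LM_le:
  assumes ex: "\<exists>M. S1 N M e1 \<noteq> {}" and sub: "\<And>M. S1 N M e1 \<subseteq> S2 N M e2"
  shows "LM S2 N e2 \<le> LM S1 N e1"
proof -
  have "S1 N (LM S1 N e1) e1 \<noteq> {}" unfolding LM_def using ex by (rule LeastI_ex)
  then have "S2 N (LM S1 N e1) e2 \<noteq> {}" using sub by blast
  then show ?thesis unfolding LM_def by (rule Least_le)
qed

lemma gL_le:
  assumes "\<And>N. LM S2 N e2 \<le> LM S1 N e1"
  shows "gL S2 e2 \<le> gL S1 e1"
  unfolding gL_def
proof (rule Limsup_mono, rule always_eventually, rule allI)
  fix N
  show "ereal (real (LM S2 N e2) / real N) \<le> ereal (real (LM S1 N e1) / real N)"
    using assms[of N] by (simp add: divide_right_mono)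
qed

lemma rate_eq:
  fixes SF SD :: "nat \<Rightarrow> nat \<Rightarrow> real \<Rightarrow> ('x \<times> 'x) set"
  assumes monoF: "\<And>N M e e'. e \<le> e' \<Longrightarrow> SF N M e \<subseteq> SF N M e'"
    and monoD: "\<And>N M e e'. e \<le> e' \<Longrightarrow> SD N M e \<subseteq> SD N M e'"
    and exD: "\<And>N e. 0 < e \<Longrightarrow> \<exists>M. SD N M e \<noteq> {}"
    and incl1: "\<And>N M e. 0 < e \<Longrightarrow> e \<le> 1 \<Longrightarrow> SD N M e \<subseteq> SF N M (2*e)"
    and incl2: "\<And>N M e. 0 < e \<Longrightarrow> SF N M e \<subseteq> SD N M (2 * sqrt e)"
  shows "comp_rate SF = comp_rate SD"
proof -
  have exF: "\<exists>M. SF N M e \<noteq> {}" if "0 < e" for N e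
  proof -
    define d where "d = min (e/2) 1"
    have d: "0 < d" "d \<le> 1" "2*d \<le> e" unfolding d_def using that by auto
    obtain M where "SD N M d \<noteq> {}" using exD[OF d(1)] by blast
    then have "SF N M (2*d) \<noteq> {}" using incl1[OF d(1,2)] by blast
    then show ?thesis using monoF[OF d(3)] by blast
  qed
  have cr: "comp_rate S = (SUP e\<in>{0<..}. gL S e)"
    if mono: "\<And>N M e e'. e \<le> e' \<Longrightarrow> S N M e \<subseteq> S N M e'"
     and ex: "\<And>N e. 0 < e \<Longrightarrow> \<exists>M. S N M e \<noteq> {}" for S :: "nat \<Rightarrow> nat \<Rightarrow> real \<Rightarrow> ('x \<times> 'x) set"
  proof -
    have "comp_rate S = Lim (at_right 0) (gL S)" unfolding comp_rate_def gL_def LM_def ..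
    also have "\<dots> = (SUP e\<in>{0<..}. gL S e)"
    proof (rule antitone_Lim)
      fix e e' :: real assume "0 < e" "e \<le> e'"
      then show "gL S e' \<le> gL S e" using ex mono by (intro gL_le LM_le) auto
    qed
    finally show ?thesis .
  qed
  have "(SUP e\<in>{0<..}. gL SF e) \<le> (SUP e\<in>{0<..}. gL SD e)"
  proof (rule SUP_least)
    fix e :: real assume "e \<in> {0<..}"
    then have e: "0 < e" by simp
    define d where "d = min (e/2) 1"
    have d: "0 < d" "d \<le> 1" "2*d \<le> e" unfolding d_def using e by auto
    have "gL SF e \<le> gL SD d"
    proof (intro gL_le LM_le)
      fix N M show "\<exists>M. SD N M d \<noteq> {}" using exD[OF d(1)] .
      show "SD N M d \<subseteq> SF N M e" using incl1[OF d(1,2)] monoF[OF d(3)] by blast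
    qed
    also have "\<dots> \<le> (SUP e\<in>{0<..}. gL SD e)" using d by (intro SUP_upper) simp
    finally show "gL SF e \<le> (SUP e\<in>{0<..}. gL SD e)" .
  qed
  moreover have "(SUP e\<in>{0<..}. gL SD e) \<le> (SUP e\<in>{0<..}. gL SF e)"
  proof (rule SUP_least)
    fix e :: real assume "e \<in> {0<..}"
    then have e: "0 < e" by simp
    define d where "d = (e/2)^2"
    have d: "0 < d" "2 * sqrt d = e" unfolding d_def using e by auto
    have "gL SD e \<le> gL SF d"
    proof (intro gL_le LM_le)
      fix N M show "\<exists>M. SF N M d \<noteq> {}" using exF[OF d(1)] .
      show "SF N M d \<subseteq> SD N M e" using incl2[OF d(1)] d(2) by simp
    qed
    also have "\<dots> \<le> (SUP e\<in>{0<..}. gL SF e)" using d by (intro SUP_upper) simp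
    finally show "gL SD e \<le> (SUP e\<in>{0<..}. gL SF e)" .
  qed
  ultimately have "(SUP e\<in>{0<..}. gL SF e) = (SUP e\<in>{0<..}. gL SD e)" by (rule antisym)
  then show ?thesis using cr[OF monoF exF] cr[OF monoD exD] by simp
qed


context fixes T :: "('s,'e) opt" assumes opt: "OPT T" and sc: "strongly_causal T"
begin

lemma dil_ne: assumes rN: "rN \<in> St1 T X" shows "dilations T X rN \<noteq> {}"
proof -
  have d0: "det_eff T (triv T) = ident T (triv T)"
    using det_uniq[OF opt sc Tr1_ident[OF opt, of "triv T"]] by simp
  have sc1: "scod T rN = X" using Tr1_dom[OF opt] rN unfolding St1_def by blast
  have "seq T (par T (ident T X) (det_eff T (triv T))) rN = rN"
    unfolding d0 par_ident[OF opt] psys_triv[OF opt] using ident_unit(1)[OF opt, of rN] sc1 by simp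
  moreover have "rN \<in> St T (psys T X (triv T))"
    using Tr1_Tr[OF opt] rN unfolding St1_def St_def psys_triv[OF opt] by blast
  ultimately have "(triv T, rN) \<in> dilations T X rN" unfolding dilations_def by simp
  then show ?thesis by blast
qed

context fixes X rN Ch assumes rN: "rN \<in> St1 T X" and Ch: "Ch \<in> Tr1 T X X"
begin

abbreviation "G \<equiv> (\<lambda>(C, \<Psi>). op_dist T (psys T X C) (seq T (par T Ch (ident T C)) \<Psi>) \<Psi>)"
abbreviation "FF \<equiv> (\<lambda>(C, \<Psi>). (fidelity T (psys T X C) \<Psi> (seq T (par T Ch (ident T C)) \<Psi>))\<^sup>2)"

lemma G_bounds: "x \<in> dilations T X rN \<Longrightarrow> 0 \<le> G x \<and> G x \<le> 2 * sqrt (1 - FF x) \<and> 1 - G x / 2 \<le> sqrt (FF x) \<and> 0 \<le> FF x"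
proof -
  assume x: "x \<in> dilations T X rN"
  obtain C \<Psi> where xe: "x = (C, \<Psi>)" by (cases x)
  then have dil: "(C, \<Psi>) \<in> dilations T X rN" using x by simp
  have "0 \<le> fidelity T (psys T X C) \<Psi> (seq T (par T Ch (ident T C)) \<Psi>)"
    by (rule F_nonneg[OF opt sc rN Ch dil])
  then show ?thesis unfolding xe using op_nonneg[OF opt sc rN Ch dil] op_le[OF opt sc rN Ch dil]
      F_A[OF opt sc rN Ch dil] by simp
qed

lemma G_bdd: "bdd_above (G ` dilations T X rN)"
proof (rule bdd_aboveI2[where M=2])
  fix x assume x: "x \<in> dilations T X rN"
  then have "G x \<le> 2 * sqrt (1 - FF x)" "0 \<le> FF x" using G_bounds by blast+
  moreover have "sqrt (1 - FF x) \<le> 1" using \<open>0 \<le> FF x\<close> by simp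
  ultimately show "G x \<le> 2" by linarith
qed

lemma FF_bdd: "bdd_below (FF ` dilations T X rN)"
  by (rule bdd_belowI2[where m=0]) (use G_bounds in blast)

lemma incl1_gen:
  assumes e: "0 < e" "e \<le> 1" and S: "(SUP x\<in>dilations T X rN. G x) < e"
  shows "corr_fidelity T X rN Ch > 1 - 2 * e"
proof -
  have "1 - e \<le> (INF x\<in>dilations T X rN. FF x)"
  proof (rule cINF_greatest)
    show "dilations T X rN \<noteq> {}" by (rule dil_ne[OF rN])
    fix x assume x: "x \<in> dilations T X rN"
    have "G x \<le> (SUP x\<in>dilations T X rN. G x)" by (rule cSUP_upper[OF x G_bdd])
    then have Gx: "G x < e" using S by simp
    have b: "1 - G x / 2 \<le> sqrt (FF x)" "0 \<le> FF x" using G_bounds[OF x] by blast+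
    then have "1 - e / 2 \<le> sqrt (FF x)" using Gx by linarith
    moreover have "0 \<le> 1 - e/2" using e by simp
    ultimately have "(1 - e/2)^2 \<le> (sqrt (FF x))^2" by (rule power_mono)
    then have "(1 - e/2)^2 \<le> FF x" using b(2) by simp
    moreover have "1 - e \<le> (1 - e/2)^2" by (simp add: power2_eq_square algebra_simps)
    ultimately show "1 - e \<le> FF x" by linarith
  qed
  then show ?thesis unfolding corr_fidelity_def using e by simp
qed

lemma incl2_gen:
  assumes e: "0 < e" and cf: "corr_fidelity T X rN Ch > 1 - e"
  shows "(SUP x\<in>dilations T X rN. G x) < 2 * sqrt e"
proof -
  define c where "c = corr_fidelity T X rN Ch"
  have "(SUP x\<in>dilations T X rN. G x) \<le> 2 * sqrt (1 - c)"
  proof (rule cSUP_least)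
    show "dilations T X rN \<noteq> {}" by (rule dil_ne[OF rN])
    fix x assume x: "x \<in> dilations T X rN"
    have "c \<le> FF x" unfolding c_def corr_fidelity_def by (rule cINF_lower[OF FF_bdd x])
    then have "sqrt (1 - FF x) \<le> sqrt (1 - c)" by simp
    then show "G x \<le> 2 * sqrt (1 - c)" using G_bounds[OF x] by linarith
  qed
  also have "2 * sqrt (1 - c) < 2 * sqrt e" using cf unfolding c_def by simp
  finally show ?thesis .
qed

end

lemma zero_gen:
  assumes rN: "rN \<in> St1 T X"
  shows "(SUP (C, \<Psi>)\<in>dilations T X rN. op_dist T (psys T X C) (seq T (par T (ident T X) (ident T C)) \<Psi>) \<Psi>) = 0"
proof -
  have "\<And>x. x \<in> dilations T X rN \<Longrightarrow> (\<lambda>(C, \<Psi>). op_dist T (psys T X C) (seq T (par T (ident T X) (ident T C)) \<Psi>) \<Psi>) x = 0"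
  proof -
    fix x assume x: "x \<in> dilations T X rN"
    obtain C \<Psi> where xe: "x = (C, \<Psi>)" by (cases x)
    have "\<Psi> \<in> St T (psys T X C)" using x unfolding xe dilations_def by simp
    then have sc1: "scod T \<Psi> = psys T X C" using Tr_dom[OF opt] unfolding St_def by blast
    have "seq T (par T (ident T X) (ident T C)) \<Psi> = \<Psi>"
      unfolding par_ident[OF opt] using ident_unit(1)[OF opt, of \<Psi>] sc1 by simp
    moreover have "op_dist T (psys T X C) \<Psi> \<Psi> = 0"
    proof -
      have "Eff T (psys T X C) \<noteq> {}" using det_Eff[OF opt sc] by blast
      then show ?thesis unfolding op_dist_def by (simp add: cSUP_const)
    qed
    ultimately show "(\<lambda>(C, \<Psi>). op_dist T (psys T X C) (seq T (par T (ident T X) (ident T C)) \<Psi>) \<Psi>) x = 0"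
      unfolding xe by simp
  qed
  then have "(SUP (C, \<Psi>)\<in>dilations T X rN. op_dist T (psys T X C) (seq T (par T (ident T X) (ident T C)) \<Psi>) \<Psi>) = (SUP x\<in>dilations T X rN. (0::real))"
    by (intro SUP_cong) auto
  then show ?thesis using dil_ne[OF rN] by (simp add: cSUP_const)
qed

end


theorem mainTheorem6:
  fixes T :: "('s, 'e) opt" and Ob A :: 's and \<rho> :: 'e
  assumes "OPT T"
    and "strongly_causal T"
    and "digitalizable_via T Ob"
    and "\<rho> \<in> St1 T A"
  shows "I_F T Ob A \<rho> = I_dil T Ob A \<rho>"
proof -
  note opt = assms(1) and sc = assms(2) and dig = assms(3) and rho = assms(4)
  have rN: "\<And>N. ev_pow T \<rho> N \<in> St1 T (sys_pow T A N)" using ev_pow_St1[OF opt sc rho] .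
  have Ch: "seq T D E \<in> Tr1 T (sys_pow T A N) (sys_pow T A N)"
    if "E \<in> Tr1 T (sys_pow T A N) (sys_pow T Ob M)" "D \<in> Tr1 T (sys_pow T Ob M) (sys_pow T A N)" for N M E D
    using Tr1_seq[OF opt that] .
  show ?thesis unfolding I_F_def I_dil_def
  proof (rule rate_eq)
    fix N M and e e' :: real assume "e \<le> e'"
    then show "schemes_F T Ob A \<rho> N M e \<subseteq> schemes_F T Ob A \<rho> N M e'"
      unfolding schemes_F_def by auto
  next
    fix N M and e e' :: real assume "e \<le> e'"
    then show "schemes_dil T Ob A \<rho> N M e \<subseteq> schemes_dil T Ob A \<rho> N M e'"
      unfolding schemes_dil_def by auto
  next
    fix N and e :: real assume e: "0 < e"
    obtain k E D where ED: "E \<in> Tr1 T (sys_pow T A N) (sys_pow T Ob k)"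
      "D \<in> Tr1 T (sys_pow T Ob k) (sys_pow T A N)" "seq T D E = ident T (sys_pow T A N)"
      using dig unfolding digitalizable_via_def by blast
    have "(E, D) \<in> schemes_dil T Ob A \<rho> N k e"
      unfolding schemes_dil_def using ED zero_gen[OF opt sc rN[of N]] e by simp
    then show "\<exists>M. schemes_dil T Ob A \<rho> N M e \<noteq> {}" by blast
  next
    fix N M and e :: real assume e: "0 < e" "e \<le> 1"
    show "schemes_dil T Ob A \<rho> N M e \<subseteq> schemes_F T Ob A \<rho> N M (2 * e)"
    proof
      fix x assume x: "x \<in> schemes_dil T Ob A \<rho> N M e"
      obtain E D where xe: "x = (E, D)" by (cases x)
      have ED: "E \<in> Tr1 T (sys_pow T A N) (sys_pow T Ob M)" "D \<in> Tr1 T (sys_pow T Ob M) (sys_pow T A N)"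
        using x unfolding xe schemes_dil_def by auto
      have S: "(SUP (C, \<Psi>)\<in>dilations T (sys_pow T A N) (ev_pow T \<rho> N).
         op_dist T (psys T (sys_pow T A N) C) (seq T (par T (seq T D E) (ident T C)) \<Psi>) \<Psi>) < e"
        using x unfolding xe schemes_dil_def by auto
      have "corr_fidelity T (sys_pow T A N) (ev_pow T \<rho> N) (seq T D E) > 1 - 2 * e"
        by (rule incl1_gen[OF opt sc rN Ch[OF ED] e S])
      then show "x \<in> schemes_F T Ob A \<rho> N M (2 * e)" unfolding xe schemes_F_def using ED by simp
    qed
  next
    fix N M and e :: real assume e: "0 < e"
    show "schemes_F T Ob A \<rho> N M e \<subseteq> schemes_dil T Ob A \<rho> N M (2 * sqrt e)"
    proof
      fix x assume x: "x \<in> schemes_F T Ob A \<rho> N M e"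
      obtain E D where xe: "x = (E, D)" by (cases x)
      have ED: "E \<in> Tr1 T (sys_pow T A N) (sys_pow T Ob M)" "D \<in> Tr1 T (sys_pow T Ob M) (sys_pow T A N)"
        using x unfolding xe schemes_F_def by auto
      have cf: "corr_fidelity T (sys_pow T A N) (ev_pow T \<rho> N) (seq T D E) > 1 - e"
        using x unfolding xe schemes_F_def by auto
      have "(SUP (C, \<Psi>)\<in>dilations T (sys_pow T A N) (ev_pow T \<rho> N).
         op_dist T (psys T (sys_pow T A N) C) (seq T (par T (seq T D E) (ident T C)) \<Psi>) \<Psi>) < 2 * sqrt e"
        by (rule incl2_gen[OF opt sc rN Ch[OF ED] e cf])
      then show "x \<in> schemes_dil T Ob A \<rho> N M (2 * sqrt e)" unfolding xe schemes_dil_def using ED by simp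
    qed
  qed
qed

end
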